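(* Let $\varepsilon>0$, $m>0$, let $\mu,k$ be real functions on $\mathbb{R}^3$ and set $c_1=\frac{15}{m}\mu$, $c_2=\frac{9}{m^2}\big(k-\frac53\mu\big)$. Let $\boldsymbol\alpha(\mathbf{x},\mathbf{y})=\frac{\mathbf{y}-\mathbf{x}}{|\mathbf{y}-\mathbf{x}|^2}\chi_{B_\varepsilon(\mathbf{x})}(\mathbf{y})$ on $\mathbb{R}^3\times\mathbb{R}^3$. For $\mathbf{u}:\mathbb{R}^3\to\mathbb{R}^3$ define $(\mathcal{G}^*_{\boldsymbol\alpha}\mathbf{u})(\mathbf{x},\mathbf{y})=-\big(\mathbf{u}(\mathbf{y})-\mathbf{u}(\mathbf{x})\big)\cdot\boldsymbol\alpha(\mathbf{x},\mathbf{y})$, $(\overline{\mathcal{G}^*_{\boldsymbol\alpha}}\mathbf{u})(\mathbf{x})=-\int_{\mathbb{R}^3}\big(\mathbf{u}(\mathbf{z})-\mathbf{u}(\mathbf{x})\big)\cdot\boldsymbol\alpha(\mathbf{x},\mathbf{z})\,d\mathbf{z}$, $(\mathcal{D}^*_{\boldsymbol\alpha}\mathbf{u})(\mathbf{x},\mathbf{y})=-\big(\mathbf{u}(\mathbf{y})-\mathbf{u}(\mathbf{x})\big)\otimes\boldsymbol\alpha(\mathbf{x},\mathbf{y})$; for a scalar function $\eta$ of two points define $(\mathcal{G}_{\boldsymbol\alpha}\eta)(\mathbf{x})=\int_{\mathbb{R}^3}\big(\eta(\mathbf{y},\mathbf{x})+\eta(\mathbf{x},\mathbf{y})\big)\boldsymbol\alpha(\mathbf{x},\mathbf{y})\,d\mathbf{y}$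 (a scalar function $f$ of one point being treated as $\eta(\mathbf{x},\mathbf{y})=f(\mathbf{x})$), and for a tensor function $\boldsymbol\Psi$ of two points $(\mathcal{D}_{\boldsymbol\alpha}\boldsymbol\Psi)(\mathbf{x})=\int_{\mathbb{R}^3}\big(\boldsymbol\Psi(\mathbf{y},\mathbf{x})+\boldsymbol\Psi(\mathbf{x},\mathbf{y})\big)\boldsymbol\alpha(\mathbf{x},\mathbf{y})\,d\mathbf{y}$. Let $w(r)=1/r^2$ and let $\mathcal{L}$ be $(\mathcal{L}\mathbf{u})(\mathbf{x})=\int_{B_\varepsilon(\mathbf{x})}\big(c_1(\mathbf{x})+c_1(\mathbf{y})\big)w(|\mathbf{y}-\mathbf{x}|)\frac{(\mathbf{y}-\mathbf{x})\otimes(\mathbf{y}-\mathbf{x})}{|\mathbf{y}-\mathbf{x}|^2}\big(\mathbf{u}(\mathbf{y})-\mathbf{u}(\mathbf{x})\big)d\mathbf{y}+\int_{B_\varepsilon(\mathbf{x})}\int_{B_\varepsilon(\mathbf{x})}c_2(\mathbf{x})w(|\mathbf{y}-\mathbf{x}|)w(|\mathbf{z}-\mathbf{x}|)\big((\mathbf{y}-\mathbf{x})\otimes(\mathbf{z}-\mathbf{x})\big)\big(\mathbf{u}(\mathbf{z})-\mathbf{u}(\mathbf{x})\big)d\mathbf{z}d\mathbf{y}+\int_{B_\varepsilon(\mathbf{x})}\int_{B_\varepsilon(\mathbf{y})}c_2(\mathbf{y})w(|\mathbf{y}-\mathbf{x}|)w(|\mathbf{z}-\mathbf{y}|)\big((\mathbf{y}-\mathbf{x})\otimes(\mathbf{z}-\mathbf{y})\big)\big(\mathbf{u}(\mathbf{z})-\mathbf{u}(\mathbf{y})\big)d\mathbf{z}d\mathbf{y}$.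 Then, with $(c_1\mathcal{G}^*_{\boldsymbol\alpha}\mathbf{u})(\mathbf{x},\mathbf{y})=c_1(\mathbf{x})(\mathcal{G}^*_{\boldsymbol\alpha}\mathbf{u})(\mathbf{x},\mathbf{y})$ and $(c_1(\mathcal{D}^*_{\boldsymbol\alpha}\mathbf{u})^T)(\mathbf{x},\mathbf{y})=c_1(\mathbf{x})(\mathcal{D}^*_{\boldsymbol\alpha}\mathbf{u})(\mathbf{x},\mathbf{y})^T$, $-\mathcal{L}\mathbf{u}=\mathcal{G}_{\boldsymbol\alpha}(c_1\mathcal{G}^*_{\boldsymbol\alpha}\mathbf{u})+\mathcal{G}_{\boldsymbol\alpha}(c_2\overline{\mathcal{G}^*_{\boldsymbol\alpha}}\mathbf{u})$, and equivalently $-\mathcal{L}\mathbf{u}=\mathcal{D}_{\boldsymbol\alpha}\big(c_1(\mathcal{D}^*_{\boldsymbol\alpha}\mathbf{u})^T\big)+\mathcal{G}_{\boldsymbol\alpha}(c_2\overline{\mathcal{G}^*_{\boldsymbol\alpha}}\mathbf{u})$.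
   Context: $B_\varepsilon(\mathbf{x})$ is the open ball of radius $\varepsilon$ about $\mathbf{x}$ and $\chi_A$ the indicator of $A$; $(\mathbf{a}\otimes\mathbf{b})\mathbf{c}=\mathbf{a}(\mathbf{b}\cdot\mathbf{c})$. $\mathcal{L}$ is the linearized state-based peridynamics operator for an isotropic heterogeneous solid with bulk modulus $k$ and shear modulus $\mu$. All integrals are assumed to converge. *)

theory Defs
  imports "HOL-Analysis.Analysis"
begin

definition outer :: "real^'n \<Rightarrow> real^'m \<Rightarrow> real^'m^'n" where
  "outer a b = (\<chi> i j. a $ i * b $ j)"

definition alpha :: "real \<Rightarrow> real^3 \<Rightarrow> real^3 \<Rightarrow> real^3" where
  "alpha \<epsilon> x y = indicator (ball x \<epsilon>) y *\<^sub>R ((1 / (norm (y - x))\<^sup>2) *\<^sub>R (y - x))"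

definition Gstar :: "real \<Rightarrow> (real^3 \<Rightarrow> real^3) \<Rightarrow> real^3 \<Rightarrow> real^3 \<Rightarrow> real" where
  "Gstar \<epsilon> u x y = - ((u y - u x) \<bullet> alpha \<epsilon> x y)"

definition Gstar_bar :: "real \<Rightarrow> (real^3 \<Rightarrow> real^3) \<Rightarrow> real^3 \<Rightarrow> real" where
  "Gstar_bar \<epsilon> u x = - (\<integral>z. (u z - u x) \<bullet> alpha \<epsilon> x z \<partial>lebesgue)"

definition Dstar :: "real \<Rightarrow> (real^3 \<Rightarrow> real^3) \<Rightarrow> real^3 \<Rightarrow> real^3 \<Rightarrow> real^3^3" where
  "Dstar \<epsilon> u x y = - outer (u y - u x) (alpha \<epsilon> x y)"

definition Galpha :: "real \<Rightarrow> (real^3 \<Rightarrow> real^3 \<Rightarrow> real) \<Rightarrow> real^3 \<Rightarrow> real^3" where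
  "Galpha \<epsilon> \<eta> x = (\<integral>y. (\<eta> y x + \<eta> x y) *\<^sub>R alpha \<epsilon> x y \<partial>lebesgue)"

definition Dalpha :: "real \<Rightarrow> (real^3 \<Rightarrow> real^3 \<Rightarrow> real^3^3) \<Rightarrow> real^3 \<Rightarrow> real^3" where
  "Dalpha \<epsilon> \<Psi> x = (\<integral>y. (\<Psi> y x + \<Psi> x y) *v alpha \<epsilon> x y \<partial>lebesgue)"

definition wfun :: "real \<Rightarrow> real" where
  "wfun r = 1 / r\<^sup>2"

definition coef1 :: "real \<Rightarrow> (real^3 \<Rightarrow> real) \<Rightarrow> real^3 \<Rightarrow> real" where
  "coef1 m \<mu> x = (15 / m) * \<mu> x"

definition coef2 :: "real \<Rightarrow> (real^3 \<Rightarrow> real) \<Rightarrow> (real^3 \<Rightarrow> real) \<Rightarrow> real^3 \<Rightarrow> real" where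
  "coef2 m k \<mu> x = (9 / m\<^sup>2) * (k x - (5/3) * \<mu> x)"

definition L1_int :: "real \<Rightarrow> (real^3 \<Rightarrow> real) \<Rightarrow> (real^3 \<Rightarrow> real^3) \<Rightarrow> real^3 \<Rightarrow> real^3 \<Rightarrow> real^3" where
  "L1_int \<epsilon> c1 u x y = ((c1 x + c1 y) * wfun (norm (y - x))) *\<^sub>R
      (((1 / (norm (y - x))\<^sup>2) *\<^sub>R outer (y - x) (y - x)) *v (u y - u x))"

definition L2_int :: "(real^3 \<Rightarrow> real) \<Rightarrow> (real^3 \<Rightarrow> real^3) \<Rightarrow> real^3 \<Rightarrow> real^3 \<Rightarrow> real^3 \<Rightarrow> real^3" where
  "L2_int c2 u x y z = (c2 x * wfun (norm (y - x)) * wfun (norm (z - x))) *\<^sub>R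
      (outer (y - x) (z - x) *v (u z - u x))"

definition L3_int :: "(real^3 \<Rightarrow> real) \<Rightarrow> (real^3 \<Rightarrow> real^3) \<Rightarrow> real^3 \<Rightarrow> real^3 \<Rightarrow> real^3 \<Rightarrow> real^3" where
  "L3_int c2 u x y z = (c2 y * wfun (norm (y - x)) * wfun (norm (z - y))) *\<^sub>R
      (outer (y - x) (z - y) *v (u z - u y))"

definition Lop :: "real \<Rightarrow> (real^3 \<Rightarrow> real) \<Rightarrow> (real^3 \<Rightarrow> real) \<Rightarrow> (real^3 \<Rightarrow> real^3) \<Rightarrow> real^3 \<Rightarrow> real^3" where
  "Lop \<epsilon> c1 c2 u x =
     set_lebesgue_integral lebesgue (ball x \<epsilon>) (\<lambda>y. L1_int \<epsilon> c1 u x y)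
   + set_lebesgue_integral lebesgue (ball x \<epsilon>)
       (\<lambda>y. set_lebesgue_integral lebesgue (ball x \<epsilon>) (\<lambda>z. L2_int c2 u x y z))
   + set_lebesgue_integral lebesgue (ball x \<epsilon>)
       (\<lambda>y. set_lebesgue_integral lebesgue (ball y \<epsilon>) (\<lambda>z. L3_int c2 u x y z))"

end

theory Submission
  imports Defs
begin


lemma outer_mv: "outer a b *v c = (b \<bullet> c) *\<^sub>R a"
  by (simp add: vec_eq_iff outer_def matrix_vector_mult_def inner_vec_def sum_distrib_left mult.commute mult.left_commute)

lemma transpose_outer: "transpose (outer a b) = outer b a"
  by (simp add: vec_eq_iff outer_def transpose_def)

lemma alpha_swap: "alpha e y x = - alpha e x y"
proof -
  have i: "indicator (ball y e) x = (indicator (ball x e) y :: real)"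
    by (simp add: indicator_def dist_commute)
  have n: "norm (x - y) = norm (y - x)" by (rule norm_minus_commute)
  have d: "x - y = - (y - x)" by simp
  show ?thesis unfolding alpha_def i n d by (simp only: scaleR_right.minus norm_minus_cancel)
qed

lemma alpha_eq: "alpha e x y = (indicator (ball x e) y * wfun (norm (y - x))) *\<^sub>R (y - x)"
  by (simp add: alpha_def wfun_def)

lemma Gstar_swap: "Gstar e u y x = Gstar e u x y"
  by (simp add: Gstar_def alpha_swap[of e y x] inner_diff_left)


lemma smv: fixes M :: "real^'m::finite^'n" shows "((k::real) *\<^sub>R M) *v v = k *\<^sub>R (M *v v)"
  by (simp add: scaleR_matrix_vector_assoc)

lemma outer_scale: "outer (k *\<^sub>R a) b = k *\<^sub>R outer a b" "outer a (k *\<^sub>R b) = k *\<^sub>R outer a b"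
  "outer (-a) b = - outer a b"
  by (simp_all add: vec_eq_iff outer_def)

lemma f1_eq: "indicator (ball x e) y *\<^sub>R L1_int e c1 u x y
   = - ((c1 y * Gstar e u y x + c1 x * Gstar e u x y) *\<^sub>R alpha e x y)"
proof (cases "y \<in> ball x e")
  case True
  then show ?thesis unfolding Gstar_swap[of e u y x]
    apply (simp add: L1_int_def Gstar_def alpha_eq smv outer_mv inner_commute wfun_def)
    apply (cases "y = x")
     apply simp
    apply (simp only: scaleR_left.minus[symmetric])
    apply (rule arg_cong[where f="\<lambda>t. t *\<^sub>R (y - x)"])
    apply (simp add: field_simps power4_eq_xxxx power2_eq_square)
    done
next
  case False
  then show ?thesis by (simp add: alpha_def)
qed


lemma tr_neg: "transpose (- M) = - transpose M" for M :: "real^3^3"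
  by (simp add: transpose_def vec_eq_iff)

lemma mv_neg: "(- M) *v v = - (M *v v)" for M :: "real^3^3"
  by (simp add: vec_eq_iff matrix_vector_mult_def sum_negf)

lemma Dt: "transpose (Dstar e u a b) *v v = - ((u b - u a) \<bullet> v) *\<^sub>R alpha e a b"
  unfolding Dstar_def tr_neg mv_neg transpose_outer outer_mv
  by (simp only: scaleR_left.minus)

lemma D_eq: "(c1 y *\<^sub>R transpose (Dstar e u y x) + c1 x *\<^sub>R transpose (Dstar e u x y)) *v alpha e x y
   = (c1 y * Gstar e u y x + c1 x * Gstar e u x y) *\<^sub>R alpha e x y"
  unfolding matrix_vector_mult_add_rdistrib smv Dt Gstar_def alpha_swap[of e y x]
  by (simp add: scaleR_add_left scaleR_diff_left)

lemma L2_pt: "indicator (ball x e) z *\<^sub>R L2_int c2 u x y z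
   = ((u z - u x) \<bullet> alpha e x z) *\<^sub>R ((c2 x * wfun (norm (y - x))) *\<^sub>R (y - x))"
proof (cases "z \<in> ball x e")
  case True
  then show ?thesis by (simp add: L2_int_def alpha_eq outer_mv inner_commute)
next
  case False
  then show ?thesis by (simp add: alpha_def)
qed

lemma L3_pt: "indicator (ball y e) z *\<^sub>R L3_int c2 u x y z
   = ((u z - u y) \<bullet> alpha e y z) *\<^sub>R ((c2 y * wfun (norm (y - x))) *\<^sub>R (y - x))"
proof (cases "z \<in> ball y e")
  case True
  then show ?thesis by (simp add: L3_int_def alpha_eq outer_mv inner_commute)
next
  case False
  then show ?thesis by (simp add: alpha_def)
qed

lemma L2_inner:
  assumes "integrable lebesgue (\<lambda>z. (u z - u x) \<bullet> alpha e x z)"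
  shows "indicator (ball x e) y *\<^sub>R set_lebesgue_integral lebesgue (ball x e) (\<lambda>z. L2_int c2 u x y z)
     = - (c2 x * Gstar_bar e u x) *\<^sub>R alpha e x y"
  unfolding set_lebesgue_integral_def L2_pt
  using assms by (simp add: Gstar_bar_def alpha_eq)

lemma L3_inner:
  assumes "integrable lebesgue (\<lambda>z. (u z - u y) \<bullet> alpha e y z)"
  shows "indicator (ball x e) y *\<^sub>R set_lebesgue_integral lebesgue (ball y e) (\<lambda>z. L3_int c2 u x y z)
     = - (c2 y * Gstar_bar e u y) *\<^sub>R alpha e x y"
  unfolding set_lebesgue_integral_def L3_pt
  using assms by (simp add: Gstar_bar_def alpha_eq)


theorem theorem4p2:
  fixes \<epsilon> m :: real and \<mu> k :: "real^3 \<Rightarrow> real" and u :: "real^3 \<Rightarrow> real^3"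
    and c1 c2 :: "real^3 \<Rightarrow> real"
  assumes "\<epsilon> > 0" and "m > 0"
    and c1_def: "c1 = coef1 m \<mu>" and c2_def: "c2 = coef2 m k \<mu>"
    \<comment> \<open>all integrals occurring in the statement converge\<close>
    and int_Gbar: "\<And>x. integrable lebesgue (\<lambda>z. (u z - u x) \<bullet> alpha \<epsilon> x z)"
    and int_G1: "\<And>x. integrable lebesgue
        (\<lambda>y. (c1 y * Gstar \<epsilon> u y x + c1 x * Gstar \<epsilon> u x y) *\<^sub>R alpha \<epsilon> x y)"
    and int_G2: "\<And>x. integrable lebesgue
        (\<lambda>y. (c2 y * Gstar_bar \<epsilon> u y + c2 x * Gstar_bar \<epsilon> u x) *\<^sub>R alpha \<epsilon> x y)"
    and int_D: "\<And>x. integrable lebesgue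
        (\<lambda>y. (c1 y *\<^sub>R transpose (Dstar \<epsilon> u y x) + c1 x *\<^sub>R transpose (Dstar \<epsilon> u x y))
               *v alpha \<epsilon> x y)"
    and int_L1: "\<And>x. set_integrable lebesgue (ball x \<epsilon>) (\<lambda>y. L1_int \<epsilon> c1 u x y)"
    and int_L2_in: "\<And>x y. set_integrable lebesgue (ball x \<epsilon>) (\<lambda>z. L2_int c2 u x y z)"
    and int_L2_out: "\<And>x. set_integrable lebesgue (ball x \<epsilon>)
        (\<lambda>y. set_lebesgue_integral lebesgue (ball x \<epsilon>) (\<lambda>z. L2_int c2 u x y z))"
    and int_L3_in: "\<And>x y. set_integrable lebesgue (ball y \<epsilon>) (\<lambda>z. L3_int c2 u x y z)"
    and int_L3_out: "\<And>x. set_integrable lebesgue (ball x \<epsilon>)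
        (\<lambda>y. set_lebesgue_integral lebesgue (ball y \<epsilon>) (\<lambda>z. L3_int c2 u x y z))"
  shows "- Lop \<epsilon> c1 c2 u x =
           Galpha \<epsilon> (\<lambda>a b. c1 a * Gstar \<epsilon> u a b) x
         + Galpha \<epsilon> (\<lambda>a b. c2 a * Gstar_bar \<epsilon> u a) x
     \<and> - Lop \<epsilon> c1 c2 u x =
           Dalpha \<epsilon> (\<lambda>a b. c1 a *\<^sub>R transpose (Dstar \<epsilon> u a b)) x
         + Galpha \<epsilon> (\<lambda>a b. c2 a * Gstar_bar \<epsilon> u a) x"
proof -
  define F1 where "F1 = (\<lambda>y. indicator (ball x \<epsilon>) y *\<^sub>R L1_int \<epsilon> c1 u x y)"
  define F2 where "F2 = (\<lambda>y. indicator (ball x \<epsilon>) y *\<^sub>R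
      set_lebesgue_integral lebesgue (ball x \<epsilon>) (\<lambda>z. L2_int c2 u x y z))"
  define F3 where "F3 = (\<lambda>y. indicator (ball x \<epsilon>) y *\<^sub>R
      set_lebesgue_integral lebesgue (ball y \<epsilon>) (\<lambda>z. L3_int c2 u x y z))"
  have L: "Lop \<epsilon> c1 c2 u x = integral\<^sup>L lebesgue F1 + integral\<^sup>L lebesgue F2 + integral\<^sup>L lebesgue F3"
    unfolding Lop_def F1_def F2_def F3_def by (simp only: set_lebesgue_integral_def)
  have i2: "integrable lebesgue F2" using int_L2_out[of x] unfolding F2_def set_integrable_def .
  have i3: "integrable lebesgue F3" using int_L3_out[of x] unfolding F3_def set_integrable_def .
  have g1: "Galpha \<epsilon> (\<lambda>a b. c1 a * Gstar \<epsilon> u a b) x = - integral\<^sup>L lebesgue F1"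
    unfolding Galpha_def F1_def f1_eq by (simp only: integral_minus minus_minus)
  have d1: "Dalpha \<epsilon> (\<lambda>a b. c1 a *\<^sub>R transpose (Dstar \<epsilon> u a b)) x = - integral\<^sup>L lebesgue F1"
    unfolding Dalpha_def F1_def f1_eq D_eq by (simp only: integral_minus minus_minus)
  have pt: "(c2 y * Gstar_bar \<epsilon> u y + c2 x * Gstar_bar \<epsilon> u x) *\<^sub>R alpha \<epsilon> x y = - (F2 y + F3 y)" for y
    unfolding F2_def F3_def L2_inner[OF int_Gbar] L3_inner[OF int_Gbar]
    by (simp only: scaleR_add_left minus_add_distrib scaleR_left.minus minus_minus add.commute)
  have g2: "Galpha \<epsilon> (\<lambda>a b. c2 a * Gstar_bar \<epsilon> u a) x = - (integral\<^sup>L lebesgue F2 + integral\<^sup>L lebesgue F3)"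
    unfolding Galpha_def pt by (simp only: integral_minus Bochner_Integration.integral_add[OF i2 i3])
  show ?thesis unfolding L g1 d1 g2 by (simp only: minus_add_distrib add.assoc simp_thms)
qed

end
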